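(* Let $\mu$ be a positive Borel measure on $\mathbb{R}^d$ with bounded support $E$, $\mu(E)=1$, and $\mu(B(x,r))\le c_0r^\alpha$ for every open ball $B(x,r)$, where $0<\alpha\le d$ and $c_0>0$. Then there exist $c_1,c_2>0$ such that for every $N$, every point distribution $\mathcal{P}_N=\{z_1,\dots,z_N\}\subset\mathbb{R}^d$ and every $M\ge c_1N^{1/\alpha}$, $$\int_{\{1\le|\xi|\le M\}}\left|\sum_{j=1}^Ne^{-2\pi i\xi\cdot z_j}-N\widehat\mu(\xi)\right|^2d\xi\ge c_2NM^d.$$
   Context: $\widehat\mu(\xi)=\int e^{-2\pi i\xi\cdot x}d\mu(x)$. *)

theory Defs
  imports "HOL-Analysis.Analysis"
begin

definition msupport :: "'a::metric_space measure \<Rightarrow> 'a set" where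
  "msupport \<mu> = {x. \<forall>r>0. emeasure \<mu> (ball x r) > 0}"

definition fourier_measure :: "'a::euclidean_space measure \<Rightarrow> 'a \<Rightarrow> complex" where
  "fourier_measure \<mu> \<xi> = (LINT x|\<mu>. cis (- 2 * pi * (\<xi> \<bullet> x)))"

end

theory Submission
  imports Defs "HOL-Probability.Characteristic_Functions"
begin
lemma integrable_exp_sq: "integrable lborel (\<lambda>x::real. exp (- x\<^sup>2 / 2))"
proof -
  have "integrable lborel (\<lambda>x. sqrt (2*pi) * std_normal_density x)"
    using integrable_std_normal_moment[of 0] by simp
  then show ?thesis by (simp add: std_normal_density_def)
qed

lemma gauss_std:
  "integrable lborel (\<lambda>x::real. exp (- x\<^sup>2 / 2) *\<^sub>R cis (t * x))"
  "(\<integral>x. exp (- x\<^sup>2 / 2) *\<^sub>R cis (t * x) \<partial>lborel) = complex_of_real (sqrt (2*pi) * exp (- t\<^sup>2 / 2))"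
proof -
  show i: "integrable lborel (\<lambda>x::real. exp (- x\<^sup>2 / 2) *\<^sub>R cis (t * x))"
    by (rule Bochner_Integration.integrable_bound[OF integrable_exp_sq]) (auto simp: norm_cis intro!: borel_measurable_continuous_onI continuous_intros)
  have "char std_normal_distribution t = (\<integral>x. std_normal_density x *\<^sub>R iexp (t * x) \<partial>lborel)"
    unfolding char_def by (subst integral_density) (auto simp: normal_density_nonneg)
  also have "\<dots> = (\<integral>x. (1 / sqrt (2*pi)) *\<^sub>R (exp (- x\<^sup>2 / 2) *\<^sub>R cis (t * x)) \<partial>lborel)"
    by (simp add: std_normal_density_def cis_conv_exp mult.commute)
  also have "\<dots> = (1 / sqrt (2*pi)) *\<^sub>R (\<integral>x. exp (- x\<^sup>2 / 2) *\<^sub>R cis (t * x) \<partial>lborel)"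
    by (rule integral_scaleR_right)
  finally have "(\<integral>x. exp (- x\<^sup>2 / 2) *\<^sub>R cis (t * x) \<partial>lborel) = sqrt (2*pi) *\<^sub>R char std_normal_distribution t"
    by simp
  then show "(\<integral>x. exp (- x\<^sup>2 / 2) *\<^sub>R cis (t * x) \<partial>lborel) = complex_of_real (sqrt (2*pi) * exp (- t\<^sup>2 / 2))"
    by (simp add: char_std_normal_distribution scaleR_conv_of_real)
qed

lemma gauss_1d:
  fixes a t :: real assumes a: "a > 0"
  shows "integrable lborel (\<lambda>x::real. exp (- x\<^sup>2 / (2*a\<^sup>2)) *\<^sub>R cis (t * x))"
    "(\<integral>x. exp (- x\<^sup>2 / (2*a\<^sup>2)) *\<^sub>R cis (t * x) \<partial>lborel) = complex_of_real (a * sqrt (2*pi) * exp (- a\<^sup>2 * t\<^sup>2 / 2))"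
proof -
  let ?f = "\<lambda>x::real. exp (- x\<^sup>2 / (2*a\<^sup>2)) *\<^sub>R cis (t * x)"
  have eq: "?f (0 + a * x) = exp (- x\<^sup>2 / 2) *\<^sub>R cis ((t*a) * x)" for x
    using a by (simp add: power_mult_distrib mult.assoc)
  have "integrable lborel (\<lambda>x. ?f (0 + a * x))"
    unfolding eq by (rule gauss_std)
  then show "integrable lborel ?f"
    using lborel_integrable_real_affine_iff[of a ?f 0] a by simp
  have "(\<integral>x. ?f x \<partial>lborel) = \<bar>a\<bar> *\<^sub>R (\<integral>x. ?f (0 + a * x) \<partial>lborel)"
    by (rule lborel_integral_real_affine) (use a in simp)
  also have "\<dots> = a *\<^sub>R complex_of_real (sqrt (2*pi) * exp (- (t*a)\<^sup>2 / 2))"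
    unfolding eq gauss_std using a by simp
  finally show "(\<integral>x. ?f x \<partial>lborel) = complex_of_real (a * sqrt (2*pi) * exp (- a\<^sup>2 * t\<^sup>2 / 2))"
    by (simp add: scaleR_conv_of_real power_mult_distrib mult.commute)
qed

lemma lborel_integral_prod:
  fixes f :: "'a::euclidean_space \<Rightarrow> real \<Rightarrow> complex"
  assumes int: "\<And>b. b \<in> Basis \<Longrightarrow> integrable lborel (f b)"
  shows "integrable lborel (\<lambda>x::'a. \<Prod>b\<in>Basis. f b (x \<bullet> b))"
    "(\<integral>x. (\<Prod>b\<in>Basis. f b (x \<bullet> b)) \<partial>(lborel::'a measure)) = (\<Prod>b\<in>Basis. \<integral>x. f b x \<partial>lborel)"
proof -
  interpret P: product_sigma_finite "\<lambda>_::'a. lborel::real measure"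
    by standard
  interpret F: finite_product_sigma_finite "\<lambda>_::'a. lborel::real measure" Basis
    by standard simp
  have meas[measurable]: "b \<in> Basis \<Longrightarrow> f b \<in> borel_measurable borel" for b
    using int[of b] by (simp add: borel_measurable_integrable)
  have m2: "(\<lambda>x::'a. \<Prod>b\<in>Basis. f b (x \<bullet> b)) \<in> borel_measurable borel"
    by measurable
  have g: "(\<lambda>y. \<Sum>b\<in>Basis. y b *\<^sub>R b) \<in> measurable (\<Pi>\<^sub>M b\<in>Basis. (lborel::real measure)) (borel::'a measure)"
    by measurable
  have cong: "(\<Prod>c\<in>Basis. f c ((\<Sum>b\<in>Basis. y b *\<^sub>R b) \<bullet> c)) = (\<Prod>c\<in>Basis. f c (y c))" for y
    by (intro prod.cong refl) (simp add: inner_sum_left inner_Basis if_distrib[of "\<lambda>x. _ * x"] sum.delta cong: if_cong)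
  have I: "integrable (\<Pi>\<^sub>M b\<in>Basis. lborel) (\<lambda>y. \<Prod>c\<in>Basis. f c (y c))"
    by (rule P.product_integrable_prod) (auto intro: int)
  show "integrable lborel (\<lambda>x::'a. \<Prod>b\<in>Basis. f b (x \<bullet> b))"
    apply (subst lborel_eq)
    apply (subst integrable_distr_eq[OF g m2])
    unfolding cong by (rule I)
  show "(\<integral>x. (\<Prod>b\<in>Basis. f b (x \<bullet> b)) \<partial>(lborel::'a measure)) = (\<Prod>b\<in>Basis. \<integral>x. f b x \<partial>lborel)"
    apply (subst lborel_eq)
    apply (subst integral_distr[OF g m2])
    unfolding cong by (rule P.product_integral_prod) (auto intro: int)
qed

lemma prod_scaleR_cis: "finite A \<Longrightarrow> (\<Prod>b\<in>A. r b *\<^sub>R cis (p b)) = (\<Prod>b\<in>A. r b) *\<^sub>R cis (\<Sum>b\<in>A. p b)"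
  by (induction A rule: finite_induct) (auto simp: cis_mult[symmetric] algebra_simps)

lemma sum_sq_Basis: "(\<Sum>b\<in>Basis. (x \<bullet> b)\<^sup>2) = (norm (x::'a::euclidean_space))\<^sup>2"
proof -
  have "(norm x)\<^sup>2 = x \<bullet> x" by (simp add: power2_norm_eq_inner)
  also have "\<dots> = (\<Sum>b\<in>Basis. (x \<bullet> b) * (x \<bullet> b))" by (rule euclidean_inner)
  finally show ?thesis by (simp add: power2_eq_square)
qed

definition gk :: "real \<Rightarrow> 'a::euclidean_space \<Rightarrow> real" where
  "gk a \<xi> = exp (- (norm \<xi>)\<^sup>2 / (2*a\<^sup>2))"

lemma gauss_nd:
  fixes a t :: real and v :: "'a::euclidean_space" assumes a: "a > 0"
  shows "integrable lborel (\<lambda>\<xi>::'a. gk a \<xi> *\<^sub>R cis (t * (\<xi> \<bullet> v)))"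
    "(\<integral>\<xi>. gk a \<xi> *\<^sub>R cis (t * (\<xi> \<bullet> v)) \<partial>lborel) = complex_of_real ((a * sqrt (2*pi)) ^ DIM('a) * exp (- a\<^sup>2 * t\<^sup>2 * (norm v)\<^sup>2 / 2))"
proof -
  define f where "f b x = exp (- x\<^sup>2 / (2*a\<^sup>2)) *\<^sub>R cis ((t * (v \<bullet> b)) * x)" for b x
  have eq: "gk a \<xi> *\<^sub>R cis (t * (\<xi> \<bullet> v)) = (\<Prod>b\<in>Basis. f b (\<xi> \<bullet> b))" for \<xi> :: 'a
  proof -
    have "(\<Prod>b\<in>Basis. f b (\<xi> \<bullet> b)) = (\<Prod>b\<in>Basis. exp (- (\<xi> \<bullet> b)\<^sup>2 / (2*a\<^sup>2))) *\<^sub>R cis (\<Sum>b\<in>Basis. (t * (v \<bullet> b)) * (\<xi> \<bullet> b))"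
      unfolding f_def by (rule prod_scaleR_cis) simp
    also have "(\<Prod>b\<in>Basis. exp (- (\<xi> \<bullet> b)\<^sup>2 / (2*a\<^sup>2))) = exp (\<Sum>b\<in>Basis. - (\<xi> \<bullet> b)\<^sup>2 / (2*a\<^sup>2))"
      by (simp add: exp_sum)
    also have "(\<Sum>b\<in>Basis. - (\<xi> \<bullet> b)\<^sup>2 / (2*a\<^sup>2)) = - (norm \<xi>)\<^sup>2 / (2*a\<^sup>2)"
      by (simp add: sum_divide_distrib[symmetric] sum_negf sum_sq_Basis)
    also have "(\<Sum>b\<in>Basis. (t * (v \<bullet> b)) * (\<xi> \<bullet> b)) = t * (\<xi> \<bullet> v)"
      by (simp add: euclidean_inner[of \<xi> v] sum_distrib_left mult_ac)
    finally show ?thesis by (simp add: gk_def)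
  qed
  have int: "b \<in> Basis \<Longrightarrow> integrable lborel (f b)" for b
    unfolding f_def using gauss_1d(1)[OF a] .
  show "integrable lborel (\<lambda>\<xi>::'a. gk a \<xi> *\<^sub>R cis (t * (\<xi> \<bullet> v)))"
    unfolding eq by (rule lborel_integral_prod(1)[OF int])
  have "(\<integral>\<xi>. gk a \<xi> *\<^sub>R cis (t * (\<xi> \<bullet> v)) \<partial>lborel) = (\<Prod>b\<in>(Basis::'a set). \<integral>x. f b x \<partial>lborel)"
    unfolding eq by (rule lborel_integral_prod(2)[OF int])
  also have "\<dots> = (\<Prod>b\<in>(Basis::'a set). complex_of_real (a * sqrt (2*pi) * exp (- a\<^sup>2 * (t * (v \<bullet> b))\<^sup>2 / 2)))"
    unfolding f_def using gauss_1d(2)[OF a] by simp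
  also have "\<dots> = complex_of_real ((\<Prod>b\<in>(Basis::'a set). a * sqrt (2*pi)) * (\<Prod>b\<in>(Basis::'a set). exp (- a\<^sup>2 * (t * (v \<bullet> b))\<^sup>2 / 2)))"
    by (simp add: prod.distrib)
  also have "(\<Prod>b\<in>(Basis::'a set). exp (- a\<^sup>2 * (t * (v \<bullet> b))\<^sup>2 / 2)) = exp (\<Sum>b\<in>(Basis::'a set). - a\<^sup>2 * t\<^sup>2 / 2 * (v \<bullet> b)\<^sup>2)"
    by (simp add: exp_sum power_mult_distrib mult_ac)
  also have "(\<Sum>b\<in>(Basis::'a set). - a\<^sup>2 * t\<^sup>2 / 2 * (v \<bullet> b)\<^sup>2) = - a\<^sup>2 * t\<^sup>2 * (norm v)\<^sup>2 / 2"
    using sum_distrib_left[of "- a\<^sup>2 * t\<^sup>2 / 2" "\<lambda>b. (v \<bullet> b)\<^sup>2" "Basis::'a set"] by (simp add: sum_sq_Basis)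
  finally show "(\<integral>\<xi>. gk a \<xi> *\<^sub>R cis (t * (\<xi> \<bullet> v)) \<partial>lborel) = complex_of_real ((a * sqrt (2*pi)) ^ DIM('a) * exp (- a\<^sup>2 * t\<^sup>2 * (norm v)\<^sup>2 / 2))"
    by simp
qed

lemma msupport_full:
  fixes \<mu> :: "'a::euclidean_space measure"
  assumes borel: "sets \<mu> = sets borel"
    and mass: "emeasure \<mu> (msupport \<mu>) = 1"
  shows "space \<mu> = UNIV" "emeasure \<mu> UNIV = 1" "prob_space \<mu>"
proof -
  show sp: "space \<mu> = UNIV" using sets_eq_imp_space_eq[OF borel] by simp
  have ms: "msupport \<mu> \<in> sets \<mu>"
    using mass emeasure_notin_sets by fastforce
  define F where "F = {B. \<exists>x r. B = ball x r \<and> r > 0 \<and> emeasure \<mu> B = 0}"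
  have "\<And>S. S \<in> F \<Longrightarrow> open S" unfolding F_def by auto
  then obtain F' where F': "F' \<subseteq> F" "countable F'" "\<Union>F' = \<Union>F" by (rule Lindelof)
  have null: "\<Union>F' \<in> null_sets \<mu>"
  proof -
    have "(\<Union>B\<in>F'. id B) \<in> null_sets \<mu>"
    proof (rule null_sets_UN'[OF F'(2)])
      fix B assume "B \<in> F'"
      then obtain x r where "B = ball x r" "emeasure \<mu> B = 0" using F'(1) F_def by auto
      then show "id B \<in> null_sets \<mu>" using borel by (auto simp: null_sets_def)
    qed
    then show ?thesis by simp
  qed
  have cov: "UNIV = msupport \<mu> \<union> \<Union>F'"
  proof -
    have "x \<in> \<Union>F" if "x \<notin> msupport \<mu>" for x
    proof -
      from that obtain r where r: "r > 0" "\<not> emeasure \<mu> (ball x r) > 0" unfolding msupport_def by auto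
      then have "ball x r \<in> F" unfolding F_def by (auto simp: not_less)
      then show ?thesis using r(1) by (intro UnionI[of "ball x r"]) auto
    qed
    then show ?thesis using F'(3) by auto
  qed
  have "emeasure \<mu> UNIV \<le> emeasure \<mu> (msupport \<mu>) + emeasure \<mu> (\<Union>F')"
    by (subst cov, rule emeasure_subadditive) (use ms null in auto)
  also have "\<dots> = 1" using mass null by (simp add: null_sets_def)
  finally have "emeasure \<mu> UNIV \<le> 1" .
  moreover have "emeasure \<mu> (msupport \<mu>) \<le> emeasure \<mu> UNIV"
    using sets.top[of \<mu>] sp by (intro emeasure_mono) auto
  ultimately show u: "emeasure \<mu> UNIV = 1" using mass by simp
  show "prob_space \<mu>" by (rule prob_spaceI) (simp add: sp u)
qed

definition hS :: "nat \<Rightarrow> nat \<Rightarrow> real" where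
  "hS D k = exp (- (real k)\<^sup>2) * (real k + 1) ^ D"

lemma hS_nonneg: "0 \<le> hS D k" by (simp add: hS_def)

lemma summable_hS: "summable (hS D)"
proof (rule summable_comparison_test[of _ "\<lambda>k. exp ((real D + 1)\<^sup>2) * exp (-1) ^ k"])
  show "summable (\<lambda>k. exp ((real D + 1)\<^sup>2) * exp (-1) ^ k)"
    by (intro summable_mult summable_geometric) auto
  show "\<exists>N. \<forall>n\<ge>N. norm (hS D n) \<le> exp ((real D + 1)\<^sup>2) * exp (- 1) ^ n"
  proof (intro exI allI impI)
    fix k :: nat
    have "(real k + 1) ^ D \<le> exp (real k) ^ D"
      by (intro power_mono) (auto simp: add.commute[of _ 1] exp_ge_add_one_self)
    also have "\<dots> = exp (real D * real k)" by (simp add: exp_of_nat_mult[symmetric])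
    finally have "hS D k \<le> exp (- (real k)\<^sup>2) * exp (real D * real k)"
      unfolding hS_def by (intro mult_left_mono) auto
    also have "\<dots> = exp (real D * real k - (real k)\<^sup>2)" by (simp add: exp_add[symmetric])
    also have "\<dots> \<le> exp ((real D + 1)\<^sup>2 - real k)"
    proof -
      have e: "(real D + 1)\<^sup>2 - real k - (real D * real k - (real k)\<^sup>2) = (real k - (real D + 1) / 2)\<^sup>2 + 3 * (real D + 1)\<^sup>2 / 4"
        by (simp add: power2_eq_square field_simps)
      have "0 \<le> (real k - (real D + 1) / 2)\<^sup>2 + 3 * (real D + 1)\<^sup>2 / 4" by simp
      then have "real D * real k - (real k)\<^sup>2 \<le> (real D + 1)\<^sup>2 - real k"
        using e by linarith
      then show ?thesis by simp
    qed
    also have "\<dots> = exp ((real D + 1)\<^sup>2) * exp (- 1) ^ k"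
      by (simp add: exp_diff exp_minus exp_of_nat_mult[symmetric] field_simps power_divide)
    finally show "norm (hS D k) \<le> exp ((real D + 1)\<^sup>2) * exp (- 1) ^ k"
      using hS_nonneg[of D k] by simp
  qed
qed

lemma ennreal_le_suminf1: "(f k :: ennreal) \<le> suminf f"
  using sum_le_suminf[OF summableI, of "{k}" f] by simp

lemma shell_bound:
  fixes \<mu> :: "'a::euclidean_space measure" and \<alpha> c0 a :: real and x :: 'a
  assumes borel: "sets \<mu> = sets borel"
    and alpha: "0 < \<alpha>" "\<alpha> \<le> real DIM('a)"
    and ball_bound: "\<And>x r. r > 0 \<Longrightarrow> emeasure \<mu> (ball x r) \<le> ennreal (c0 * r powr \<alpha>)"
    and a: "a > 0" and c0: "c0 > 0"
  shows "(\<integral>\<^sup>+y. ennreal (exp (- (a * norm (x - y))\<^sup>2)) \<partial>\<mu>) \<le> ennreal (c0 / a powr \<alpha> * suminf (hS DIM('a)))"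
proof -
  let ?D = "DIM('a)"
  have pt: "ennreal (exp (- (a * norm (x - y))\<^sup>2)) \<le> (\<Sum>k. ennreal (exp (- (real k)\<^sup>2)) * indicator (ball x ((real k + 1) / a)) y)" for y
  proof -
    define k where "k = nat \<lfloor>a * dist x y\<rfloor>"
    have k1: "real k \<le> a * dist x y" unfolding k_def using a by (simp add: of_nat_nat)
    have k2: "a * dist x y < real k + 1" unfolding k_def using a by (simp add: of_nat_nat)
    have "y \<in> ball x ((real k + 1) / a)" using k2 a by (simp add: field_simps mult.commute)
    moreover have "exp (- (a * norm (x - y))\<^sup>2) \<le> exp (- (real k)\<^sup>2)"
      using k1 by (simp add: dist_norm power_mono)
    ultimately have "ennreal (exp (- (a * norm (x - y))\<^sup>2)) \<le> ennreal (exp (- (real k)\<^sup>2)) * indicator (ball x ((real k + 1) / a)) y"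
      by (simp add: ennreal_leI)
    also have "\<dots> \<le> (\<Sum>k. ennreal (exp (- (real k)\<^sup>2)) * indicator (ball x ((real k + 1) / a)) y)"
      by (rule ennreal_le_suminf1)
    finally show ?thesis .
  qed
  have "(\<integral>\<^sup>+y. ennreal (exp (- (a * norm (x - y))\<^sup>2)) \<partial>\<mu>) \<le> (\<integral>\<^sup>+y. (\<Sum>k. ennreal (exp (- (real k)\<^sup>2)) * indicator (ball x ((real k + 1) / a)) y) \<partial>\<mu>)"
    by (intro nn_integral_mono pt)
  also have "\<dots> = (\<Sum>k. \<integral>\<^sup>+y. ennreal (exp (- (real k)\<^sup>2)) * indicator (ball x ((real k + 1) / a)) y \<partial>\<mu>)"
    by (rule nn_integral_suminf) (subst measurable_cong_sets[OF borel refl], measurable, simp add: pred_def)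
  also have "\<dots> = (\<Sum>k. ennreal (exp (- (real k)\<^sup>2)) * emeasure \<mu> (ball x ((real k + 1) / a)))"
    by (intro suminf_cong nn_integral_cmult_indicator) (use borel in auto)
  also have "\<dots> \<le> (\<Sum>k. ennreal (c0 / a powr \<alpha> * hS ?D k))"
  proof (intro suminf_le summableI)
    fix k :: nat
    have r: "(real k + 1) / a > 0" using a by simp
    have "((real k + 1) / a) powr \<alpha> = (real k + 1) powr \<alpha> / a powr \<alpha>"
      using a by (simp add: powr_divide)
    also have "(real k + 1) powr \<alpha> \<le> (real k + 1) powr (real ?D)"
      using alpha by (intro powr_mono) auto
    also have "\<dots> = (real k + 1) ^ ?D" by (simp add: powr_realpow)
    finally have "((real k + 1) / a) powr \<alpha> \<le> (real k + 1) ^ ?D / a powr \<alpha>"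
      using a by (simp add: divide_right_mono)
    then have "(c0 * exp (- (real k)\<^sup>2)) * ((real k + 1) / a) powr \<alpha> \<le> (c0 * exp (- (real k)\<^sup>2)) * ((real k + 1) ^ ?D / a powr \<alpha>)"
      by (intro mult_left_mono) (use c0 in auto)
    then have "exp (- (real k)\<^sup>2) * (c0 * ((real k + 1) / a) powr \<alpha>) \<le> c0 / a powr \<alpha> * hS ?D k"
      unfolding hS_def by (simp add: mult_ac)
    then have "ennreal (exp (- (real k)\<^sup>2)) * ennreal (c0 * ((real k + 1) / a) powr \<alpha>) \<le> ennreal (c0 / a powr \<alpha> * hS ?D k)"
      using c0 by (simp add: ennreal_mult[symmetric] ennreal_leI)
    moreover have "ennreal (exp (- (real k)\<^sup>2)) * emeasure \<mu> (ball x ((real k + 1) / a)) \<le> ennreal (exp (- (real k)\<^sup>2)) * ennreal (c0 * ((real k + 1) / a) powr \<alpha>)"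
      by (intro mult_left_mono ball_bound r) auto
    ultimately show "ennreal (exp (- (real k)\<^sup>2)) * emeasure \<mu> (ball x ((real k + 1) / a)) \<le> ennreal (c0 / a powr \<alpha> * hS ?D k)"
      by (rule order_trans[rotated])
  qed
  also have "\<dots> = ennreal (c0 / a powr \<alpha> * suminf (hS ?D))"
  proof (rule suminf_ennreal_eq)
    show "(\<lambda>k. c0 / a powr \<alpha> * hS ?D k) sums (c0 / a powr \<alpha> * suminf (hS ?D))"
      by (rule sums_mult[OF summable_sums[OF summable_hS]])
  qed (use c0 a hS_nonneg in auto)
  finally show ?thesis .
qed

definition Kf :: "real \<Rightarrow> 'a::euclidean_space \<Rightarrow> real" where
  "Kf a v = (a * sqrt (2*pi)) ^ DIM('a) * exp (- a\<^sup>2 * (2*pi)\<^sup>2 * (norm v)\<^sup>2 / 2)"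

lemma Kf_nonneg: "a > 0 \<Longrightarrow> 0 \<le> Kf a v" by (simp add: Kf_def)

lemma gk_pos: "0 < gk a \<xi>" and gk_le1: "gk a \<xi> \<le> 1"
  by (auto simp: gk_def)

lemma gauss_cos:
  fixes v :: "'a::euclidean_space" assumes a: "a > 0"
  shows "integrable lborel (\<lambda>\<xi>::'a. gk a \<xi> * cos (2*pi * (\<xi> \<bullet> v)))"
    "(\<integral>\<xi>. gk a \<xi> * cos (2*pi * (\<xi> \<bullet> v)) \<partial>lborel) = Kf a v"
proof -
  have eq: "gk a \<xi> * cos (2*pi * (\<xi> \<bullet> v)) = Re (gk a \<xi> *\<^sub>R cis (2*pi * (\<xi> \<bullet> v)))" for \<xi> :: 'a
    by simp
  show "integrable lborel (\<lambda>\<xi>::'a. gk a \<xi> * cos (2*pi * (\<xi> \<bullet> v)))"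
    unfolding eq by (rule integrable_Re[OF gauss_nd(1)[OF a]])
  show "(\<integral>\<xi>. gk a \<xi> * cos (2*pi * (\<xi> \<bullet> v)) \<partial>lborel) = Kf a v"
    unfolding eq integral_Re[OF gauss_nd(1)[OF a]] gauss_nd(2)[OF a] by (simp add: Kf_def)
qed

lemma cmod_sum_cis_sq:
  fixes z :: "nat \<Rightarrow> 'a::euclidean_space"
  shows "(cmod (\<Sum>j<N. cis (- 2 * pi * (\<xi> \<bullet> z j))))\<^sup>2 = (\<Sum>j<N. \<Sum>k<N. cos (2*pi * (\<xi> \<bullet> (z j - z k))))"
proof -
  let ?w = "\<Sum>j<N. cis (- 2 * pi * (\<xi> \<bullet> z j))"
  have "complex_of_real ((cmod ?w)\<^sup>2) = ?w * cnj ?w" by (rule complex_norm_square)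
  also have "\<dots> = (\<Sum>j<N. \<Sum>k<N. cis (- 2 * pi * (\<xi> \<bullet> z j)) * cnj (cis (- 2 * pi * (\<xi> \<bullet> z k))))"
    by (simp add: sum_distrib_left sum_distrib_right cnj_sum) (subst sum.swap, rule refl)
  also have "\<dots> = (\<Sum>j<N. \<Sum>k<N. cis (- (2*pi * (\<xi> \<bullet> (z j - z k)))))"
    by (intro sum.cong refl) (simp add: cis_cnj cis_mult inner_diff_right algebra_simps)
  finally have "Re (complex_of_real ((cmod ?w)\<^sup>2)) = Re (\<Sum>j<N. \<Sum>k<N. cis (- (2*pi * (\<xi> \<bullet> (z j - z k)))))"
    by simp
  then show ?thesis by (simp add: Re_sum)
qed

lemma int_g:
  fixes z :: "nat \<Rightarrow> 'a::euclidean_space" assumes a: "a > 0"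
  shows "integrable lborel (\<lambda>\<xi>::'a. gk a \<xi> * (cmod (\<Sum>j<N. cis (- 2 * pi * (\<xi> \<bullet> z j))))\<^sup>2)"
    "(\<integral>\<xi>. gk a \<xi> * (cmod (\<Sum>j<N. cis (- 2 * pi * (\<xi> \<bullet> z j))))\<^sup>2 \<partial>lborel) = (\<Sum>j<N. \<Sum>k<N. Kf a (z j - z k))"
proof -
  have eq: "gk a \<xi> * (cmod (\<Sum>j<N. cis (- 2 * pi * (\<xi> \<bullet> z j))))\<^sup>2 = (\<Sum>j<N. \<Sum>k<N. gk a \<xi> * cos (2*pi * (\<xi> \<bullet> (z j - z k))))" for \<xi>
    unfolding cmod_sum_cis_sq by (simp add: sum_distrib_left)
  show "integrable lborel (\<lambda>\<xi>::'a. gk a \<xi> * (cmod (\<Sum>j<N. cis (- 2 * pi * (\<xi> \<bullet> z j))))\<^sup>2)"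
    unfolding eq by (intro Bochner_Integration.integrable_sum gauss_cos(1)[OF a])
  show "(\<integral>\<xi>. gk a \<xi> * (cmod (\<Sum>j<N. cis (- 2 * pi * (\<xi> \<bullet> z j))))\<^sup>2 \<partial>lborel) = (\<Sum>j<N. \<Sum>k<N. Kf a (z j - z k))"
    unfolding eq by (simp add: Bochner_Integration.integral_sum Bochner_Integration.integrable_sum gauss_cos[OF a])
qed

lemma mu_part:
  fixes \<mu> :: "'a::euclidean_space measure" and a :: real
  assumes borel: "sets \<mu> = sets borel" and prob: "prob_space \<mu>" and a: "a > 0"
  shows "integrable lborel (\<lambda>\<xi>. gk a \<xi> * (cmod (fourier_measure \<mu> \<xi>))\<^sup>2)"
    "(\<integral>\<xi>. gk a \<xi> * (cmod (fourier_measure \<mu> \<xi>))\<^sup>2 \<partial>lborel) = (\<integral>p. Kf a (fst p - snd p) \<partial>(\<mu> \<Otimes>\<^sub>M \<mu>))"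
proof -
  interpret \<mu>: prob_space \<mu> by (rule prob)
  interpret PP: pair_prob_space \<mu> \<mu> by unfold_locales
  let ?P = "\<mu> \<Otimes>\<^sub>M \<mu>"
  interpret LP: pair_sigma_finite lborel ?P by unfold_locales
  have sP: "sets ?P = sets (borel :: ('a \<times> 'a) measure)"
    using sets_pair_measure_cong[OF borel borel] borel_prod[where 'a='a and 'b='a] by metis
  have sLP: "sets ((lborel::'a measure) \<Otimes>\<^sub>M ?P) = sets (borel :: ('a \<times> ('a \<times> 'a)) measure)"
    using sets_pair_measure_cong[OF sets_lborel sP] borel_prod[where 'a='a and 'b="'a \<times> 'a"] by metis
  have mP: "f \<in> borel_measurable ?P" if "continuous_on UNIV f" for f :: "'a \<times> 'a \<Rightarrow> complex"
    by (subst measurable_cong_sets[OF sP refl]) (rule borel_measurable_continuous_onI[OF that])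
  have mLP: "f \<in> borel_measurable ((lborel::'a measure) \<Otimes>\<^sub>M ?P)" if "continuous_on UNIV f" for f :: "'a \<times> ('a \<times> 'a) \<Rightarrow> real"
    by (subst measurable_cong_sets[OF sLP refl]) (rule borel_measurable_continuous_onI[OF that])
  define c where "c \<xi> p = cos (2*pi * (\<xi> \<bullet> (fst p - snd p)))" for \<xi> :: 'a and p :: "'a \<times> 'a"
  have h1: "(cmod (fourier_measure \<mu> \<xi>))\<^sup>2 = (\<integral>p. c \<xi> p \<partial>?P)" for \<xi>
  proof -
    define f where "f x = cis (- 2 * pi * (\<xi> \<bullet> x))" for x
    have intP: "integrable ?P (\<lambda>p. f (fst p) * cnj (f (snd p)))"
      by (rule PP.P.integrable_const_bound[where B=1]) (auto simp: f_def norm_mult intro!: mP continuous_intros)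
    have "complex_of_real ((cmod (fourier_measure \<mu> \<xi>))\<^sup>2) = fourier_measure \<mu> \<xi> * cnj (fourier_measure \<mu> \<xi>)"
      by (rule complex_norm_square)
    also have "\<dots> = (\<integral>x. f x \<partial>\<mu>) * (\<integral>y. cnj (f y) \<partial>\<mu>)"
      by (simp add: fourier_measure_def f_def)
    also have "\<dots> = (\<integral>x. (\<integral>y. f x * cnj (f y) \<partial>\<mu>) \<partial>\<mu>)"
      by simp
    also have "\<dots> = (\<integral>p. f (fst p) * cnj (f (snd p)) \<partial>?P)"
      using PP.integral_fst'[OF intP] by simp
    finally have "(cmod (fourier_measure \<mu> \<xi>))\<^sup>2 = Re (\<integral>p. f (fst p) * cnj (f (snd p)) \<partial>?P)"
      by (metis Re_complex_of_real)
    also have "\<dots> = (\<integral>p. Re (f (fst p) * cnj (f (snd p))) \<partial>?P)"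
      by (rule integral_Re[OF intP, symmetric])
    also have "\<dots> = (\<integral>p. c \<xi> p \<partial>?P)"
      by (intro Bochner_Integration.integral_cong refl)
         (simp add: f_def c_def cis_cnj cis_mult inner_diff_right algebra_simps, metis cos_minus minus_diff_eq)
    finally show ?thesis .
  qed
  have intG: "integrable lborel (gk a :: 'a \<Rightarrow> real)"
    using gauss_cos(1)[OF a, of 0] by simp
  have intLP: "integrable ((lborel::'a measure) \<Otimes>\<^sub>M ?P) (\<lambda>(\<xi>::'a, p). gk a \<xi> * c \<xi> p)"
  proof (rule Bochner_Integration.integrable_bound)
    show "integrable ((lborel::'a measure) \<Otimes>\<^sub>M ?P) (\<lambda>(\<xi>::'a, p). gk a \<xi>)"
    proof (rule integrableI_bounded)
      show "(\<lambda>(\<xi>::'a, p). gk a \<xi>) \<in> borel_measurable ((lborel::'a measure) \<Otimes>\<^sub>M ?P)"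
        unfolding gk_def by (rule mLP) (use a in \<open>auto intro!: continuous_intros simp: split_beta\<close>)
      have "(\<integral>\<^sup>+ x. ennreal (norm ((\<lambda>(\<xi>::'a, p). gk a \<xi>) x)) \<partial>((lborel::'a measure) \<Otimes>\<^sub>M ?P)) = (\<integral>\<^sup>+ \<xi>. \<integral>\<^sup>+ p. ennreal (gk a \<xi>) \<partial>?P \<partial>(lborel::'a measure))"
        by (subst PP.P.nn_integral_fst[symmetric])
           (use a in \<open>auto simp: gk_def split_beta intro!: mLP continuous_intros measurable_compose[OF _ measurable_ennreal]\<close>)
      also have "\<dots> = (\<integral>\<^sup>+ \<xi>. ennreal (gk a \<xi>) \<partial>(lborel::'a measure))"
        by (simp add: PP.P.emeasure_space_1)
      also have "\<dots> < \<infinity>"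
        using intG by (auto simp: integrable_iff_bounded gk_def)
      finally show "(\<integral>\<^sup>+ x. ennreal (norm ((\<lambda>(\<xi>::'a, p). gk a \<xi>) x)) \<partial>((lborel::'a measure) \<Otimes>\<^sub>M ?P)) < \<infinity>" .
    qed
    show "(\<lambda>(\<xi>::'a, p). gk a \<xi> * c \<xi> p) \<in> borel_measurable ((lborel::'a measure) \<Otimes>\<^sub>M ?P)"
      unfolding gk_def c_def by (rule mLP) (use a in \<open>auto intro!: continuous_intros simp: split_beta\<close>)
    show "AE x in (lborel::'a measure) \<Otimes>\<^sub>M ?P. norm ((\<lambda>(\<xi>::'a, p). gk a \<xi> * c \<xi> p) x) \<le> norm ((\<lambda>(\<xi>::'a, p). gk a \<xi>) x)"
      by (auto simp: c_def abs_mult gk_def intro!: mult_left_le)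
  qed
  have eqG: "gk a \<xi> * (cmod (fourier_measure \<mu> \<xi>))\<^sup>2 = (\<integral>p. gk a \<xi> * c \<xi> p \<partial>?P)" for \<xi>
    by (simp add: h1)
  show "integrable lborel (\<lambda>\<xi>. gk a \<xi> * (cmod (fourier_measure \<mu> \<xi>))\<^sup>2)"
    unfolding eqG using LP.integrable_fst[OF intLP] .
  have "(\<integral>\<xi>. gk a \<xi> * (cmod (fourier_measure \<mu> \<xi>))\<^sup>2 \<partial>lborel) = (\<integral>\<xi>. (\<integral>p. gk a \<xi> * c \<xi> p \<partial>?P) \<partial>lborel)"
    unfolding eqG ..
  also have "\<dots> = (\<integral>p. (\<integral>\<xi>. gk a \<xi> * c \<xi> p \<partial>lborel) \<partial>?P)"
    using LP.Fubini_integral[OF intLP] by simp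
  also have "\<dots> = (\<integral>p. Kf a (fst p - snd p) \<partial>?P)"
    by (intro Bochner_Integration.integral_cong refl) (simp add: c_def gauss_cos[OF a])
  finally show "(\<integral>\<xi>. gk a \<xi> * (cmod (fourier_measure \<mu> \<xi>))\<^sup>2 \<partial>lborel) = (\<integral>p. Kf a (fst p - snd p) \<partial>(\<mu> \<Otimes>\<^sub>M \<mu>))" .
qed

lemma mu_bound:
  fixes \<mu> :: "'a::euclidean_space measure" and a \<alpha> c0 :: real
  assumes borel: "sets \<mu> = sets borel" and prob: "prob_space \<mu>" and a: "a > 0"
    and alpha: "0 < \<alpha>" "\<alpha> \<le> real DIM('a)"
    and ball_bound: "\<And>x r. r > 0 \<Longrightarrow> emeasure \<mu> (ball x r) \<le> ennreal (c0 * r powr \<alpha>)"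
    and c0: "c0 > 0"
  shows "(\<integral>p. Kf a (fst p - snd p) \<partial>(\<mu> \<Otimes>\<^sub>M \<mu>)) \<le> (a * sqrt (2*pi)) ^ DIM('a) * (c0 / a powr \<alpha> * suminf (hS DIM('a)))"
proof -
  interpret \<mu>: prob_space \<mu> by (rule prob)
  interpret PP: pair_prob_space \<mu> \<mu> by unfold_locales
  let ?P = "\<mu> \<Otimes>\<^sub>M \<mu>"
  let ?A0 = "(a * sqrt (2*pi)) ^ DIM('a)"
  let ?a' = "sqrt 2 * pi * a"
  let ?B = "c0 / a powr \<alpha> * suminf (hS DIM('a))"
  have a': "?a' > 0" using a by simp
  have B0: "0 \<le> ?B" using c0 a by (auto intro!: mult_nonneg_nonneg divide_nonneg_nonneg suminf_nonneg summable_hS hS_nonneg)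
  have sP: "sets ?P = sets (borel :: ('a \<times> 'a) measure)"
    using sets_pair_measure_cong[OF borel borel] borel_prod[where 'a='a and 'b='a] by metis
  have mP: "f \<in> borel_measurable ?P" if "continuous_on UNIV f" for f :: "'a \<times> 'a \<Rightarrow> real"
    by (subst measurable_cong_sets[OF sP refl]) (rule borel_measurable_continuous_onI[OF that])
  have Kf_eq: "Kf a v = ?A0 * exp (- (?a' * norm v)\<^sup>2)" for v :: 'a
    by (simp add: Kf_def power_mult_distrib)
  have inner: "(\<integral>\<^sup>+y. ennreal (Kf a (x - y)) \<partial>\<mu>) \<le> ennreal (?A0 * ?B)" for x
  proof -
    have "(\<integral>\<^sup>+y. ennreal (Kf a (x - y)) \<partial>\<mu>) = ennreal ?A0 * (\<integral>\<^sup>+y. ennreal (exp (- (?a' * norm (x - y))\<^sup>2)) \<partial>\<mu>)"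
      unfolding Kf_eq using a
      by (subst nn_integral_cmult[symmetric])
         (auto simp: ennreal_mult measurable_cong_sets[OF borel refl] intro!: nn_integral_cong
               borel_measurable_continuous_onI continuous_intros measurable_compose[OF _ measurable_ennreal])
    also have "\<dots> \<le> ennreal ?A0 * ennreal (c0 / ?a' powr \<alpha> * suminf (hS DIM('a)))"
      by (intro mult_left_mono shell_bound[OF borel alpha ball_bound a' c0]) auto
    also have "c0 / ?a' powr \<alpha> * suminf (hS DIM('a)) \<le> ?B"
    proof -
      have "a powr \<alpha> \<le> ?a' powr \<alpha>"
      proof (rule powr_mono2)
        have "1 * 1 \<le> sqrt 2 * pi" using pi_gt3 by (intro mult_mono) auto
        then have "1 * a \<le> (sqrt 2 * pi) * a"
          using a by (intro mult_right_mono) auto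
        then show "a \<le> ?a'" by simp
      qed (use alpha a in auto)
      then show ?thesis using c0 a
        by (intro mult_right_mono divide_left_mono suminf_nonneg summable_hS hS_nonneg) auto
    qed
    then have "ennreal ?A0 * ennreal (c0 / ?a' powr \<alpha> * suminf (hS DIM('a))) \<le> ennreal ?A0 * ennreal ?B"
      by (intro mult_left_mono ennreal_leI) auto
    also have "\<dots> = ennreal (?A0 * ?B)"
      by (rule ennreal_mult[symmetric]) (use a B0 in auto)
    finally show ?thesis .
  qed
  have "(\<integral>\<^sup>+p. ennreal (Kf a (fst p - snd p)) \<partial>?P) = (\<integral>\<^sup>+x. \<integral>\<^sup>+y. ennreal (Kf a (x - y)) \<partial>\<mu> \<partial>\<mu>)"
    by (subst \<mu>.nn_integral_fst[symmetric])
       (use a in \<open>auto simp: Kf_def intro!: measurable_compose[OF _ measurable_ennreal] mP continuous_intros\<close>)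
  also have "\<dots> \<le> (\<integral>\<^sup>+x. ennreal (?A0 * ?B) \<partial>\<mu>)"
    by (intro nn_integral_mono inner)
  also have "\<dots> = ennreal (?A0 * ?B)"
    by (simp add: \<mu>.emeasure_space_1)
  finally have le: "(\<integral>\<^sup>+p. ennreal (Kf a (fst p - snd p)) \<partial>?P) \<le> ennreal (?A0 * ?B)" .
  have "(\<integral>p. Kf a (fst p - snd p) \<partial>?P) = enn2real (\<integral>\<^sup>+p. ennreal (Kf a (fst p - snd p)) \<partial>?P)"
    by (rule integral_eq_nn_integral)
       (use a in \<open>auto simp: Kf_def intro!: mP continuous_intros\<close>)
  also have "\<dots> \<le> ?A0 * ?B"
    by (rule enn2real_leI[OF _ le]) (rule mult_nonneg_nonneg[OF _ B0], use a in simp)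
  finally show ?thesis .
qed

lemma fourier_bound:
  fixes \<mu> :: "'a::euclidean_space measure"
  assumes prob: "prob_space \<mu>"
  shows "cmod (fourier_measure \<mu> \<xi>) \<le> 1"
proof -
  interpret \<mu>: prob_space \<mu> by (rule prob)
  have "cmod (fourier_measure \<mu> \<xi>) \<le> (\<integral>x. norm (cis (- 2 * pi * (\<xi> \<bullet> x))) \<partial>\<mu>)"
    unfolding fourier_measure_def by (rule integral_norm_bound)
  also have "\<dots> = 1" by (simp add: \<mu>.prob_space)
  finally show ?thesis .
qed

lemma fourier_measurable:
  fixes \<mu> :: "'a::euclidean_space measure"
  assumes borel: "sets \<mu> = sets borel" and prob: "prob_space \<mu>"
  shows "fourier_measure \<mu> \<in> borel_measurable borel"
proof -
  interpret \<mu>: prob_space \<mu> by (rule prob)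
  have s: "sets ((borel::'a measure) \<Otimes>\<^sub>M \<mu>) = sets (borel :: ('a \<times> 'a) measure)"
    using sets_pair_measure_cong[OF refl borel, of "borel::'a measure"] borel_prod[where 'a='a and 'b='a] by metis
  have "(\<lambda>(\<xi>::'a, x::'a). cis (- 2 * pi * (\<xi> \<bullet> x))) \<in> borel_measurable ((borel::'a measure) \<Otimes>\<^sub>M \<mu>)"
    by (subst measurable_cong_sets[OF s refl]) (auto intro!: borel_measurable_continuous_onI continuous_intros simp: split_beta)
  then have "(\<lambda>\<xi>. \<integral>x. cis (- 2 * pi * (\<xi> \<bullet> x)) \<partial>\<mu>) \<in> borel_measurable borel"
    by (rule \<mu>.borel_measurable_lebesgue_integral)
  then show ?thesis unfolding fourier_measure_def[abs_def] .
qed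

lemma g_bound: "cmod (\<Sum>j<N. cis (- 2 * pi * (\<xi> \<bullet> z j))) \<le> real N"
proof -
  have "cmod (\<Sum>j<N. cis (- 2 * pi * (\<xi> \<bullet> z j))) \<le> (\<Sum>j<N. cmod (cis (- 2 * pi * (\<xi> \<bullet> z j))))"
    by (rule norm_sum)
  then show ?thesis by simp
qed

theorem lemma11:
  fixes \<mu> :: "'a::euclidean_space measure" and \<alpha> c0 :: real
  assumes borel: "sets \<mu> = sets borel"
    and bdd: "bounded (msupport \<mu>)"
    and mass: "emeasure \<mu> (msupport \<mu>) = 1"
    and alpha: "0 < \<alpha>" "\<alpha> \<le> real DIM('a)"
    and c0: "c0 > 0"
    and ball_bound: "\<And>x r. r > 0 \<Longrightarrow> emeasure \<mu> (ball x r) \<le> ennreal (c0 * r powr \<alpha>)"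
  shows "\<exists>c1>0. \<exists>c2>0. \<forall>(N::nat) (z::nat \<Rightarrow> 'a) (M::real).
           inj_on z {..<N} \<longrightarrow> M \<ge> c1 * real N powr (1 / \<alpha>) \<longrightarrow>
           (LINT \<xi>:{\<xi>. 1 \<le> norm \<xi> \<and> norm \<xi> \<le> M}|lborel.
               (cmod ((\<Sum>j<N. cis (- 2 * pi * (\<xi> \<bullet> z j))) - of_nat N * fourier_measure \<mu> \<xi>))\<^sup>2)
           \<ge> c2 * real N * M ^ DIM('a)"
proof -
  let ?D = "DIM('a)"
  have prob: "prob_space \<mu>" using msupport_full[OF borel mass] by simp
  interpret \<mu>: prob_space \<mu> by (rule prob)
  define c :: real where "c = 1 / (2 * (real ?D + 1))"
  define S where "S = suminf (hS ?D)"
  define E where "E = exp (2 * (real ?D + 1)\<^sup>2)"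
  define V where "V = measure lborel (ball (0::'a) 1)"
  define Q where "Q = max (max (8 * V) (16 * E * c0 * S)) 1"
  define c1 where "c1 = Q powr (1/\<alpha>) / c"
  define c2 where "c2 = c ^ ?D / 8"
  have c_pos: "c > 0" unfolding c_def by simp
  have S0: "S \<ge> 0" unfolding S_def by (intro suminf_nonneg summable_hS hS_nonneg)
  have E_pos: "E > 0" unfolding E_def by simp
  have V0: "V \<ge> 0" unfolding V_def by simp
  have Q1: "Q \<ge> 1" unfolding Q_def by simp
  have QV: "Q \<ge> 8 * V" unfolding Q_def by simp
  have QE: "Q \<ge> 16 * E * c0 * S" unfolding Q_def by simp
  have c1_pos: "c1 > 0" unfolding c1_def using Q1 c_pos by simp
  have c2_pos: "c2 > 0" unfolding c2_def using c_pos by simp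
  show ?thesis
  proof (rule exI[of _ c1], rule conjI[OF c1_pos], rule exI[of _ c2], rule conjI[OF c2_pos], intro allI impI)
    fix N :: nat and z :: "nat \<Rightarrow> 'a" and M :: real
    assume inj: "inj_on z {..<N}" and M: "M \<ge> c1 * real N powr (1 / \<alpha>)"
    show "(LINT \<xi>:{\<xi>. 1 \<le> norm \<xi> \<and> norm \<xi> \<le> M}|lborel.
               (cmod ((\<Sum>j<N. cis (- 2 * pi * (\<xi> \<bullet> z j))) - of_nat N * fourier_measure \<mu> \<xi>))\<^sup>2)
           \<ge> c2 * real N * M ^ ?D"
    proof (cases "N = 0")
      case True
      then show ?thesis by simp
    next
      case False
      then have N1: "real N \<ge> 1" by simp
      have Npow: "real N powr (1 / \<alpha>) \<ge> 1"
        by (rule ge_one_powr_ge_zero) (use N1 alpha in auto)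
      have "c1 * 1 \<le> c1 * real N powr (1 / \<alpha>)"
        by (intro mult_left_mono) (use Npow c1_pos in auto)
      then have M_ge: "M \<ge> c1" using M by simp
      then have M_pos: "M > 0" using c1_pos by simp
      define a where "a = c * M"
      have a_pos: "a > 0" unfolding a_def using c_pos M_pos by simp
      have Ma: "M = 2 * (real ?D + 1) * a" unfolding a_def c_def by simp
      have aQ: "a powr \<alpha> \<ge> Q * real N"
      proof -
        have "(Q * real N) powr (1/\<alpha>) = Q powr (1/\<alpha>) * real N powr (1/\<alpha>)"
          by (rule powr_mult)
        also have "\<dots> = c * (c1 * real N powr (1 / \<alpha>))"
          unfolding c1_def using c_pos by simp
        also have "\<dots> \<le> a" unfolding a_def using M c_pos by (intro mult_left_mono) auto
        finally have le: "(Q * real N) powr (1/\<alpha>) \<le> a" .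
        have "Q * real N = ((Q * real N) powr (1/\<alpha>)) powr \<alpha>"
          using alpha Q1 N1 by (simp add: powr_powr)
        also have "\<dots> \<le> a powr \<alpha>"
          by (rule powr_mono2) (use alpha le in auto)
        finally show ?thesis .
      qed
      have "1 * 1 \<le> Q * real N" using Q1 N1 by (intro mult_mono) auto
      then have QN1: "Q * real N \<ge> 1" by simp
      have a1: "a \<ge> 1"
      proof (rule ccontr)
        assume "\<not> a \<ge> 1"
        then have "a powr \<alpha> < 1 powr \<alpha>"
          by (intro powr_less_mono2) (use alpha a_pos in auto)
        then show False using aQ QN1 by simp
      qed
      have aD: "a ^ ?D \<ge> a powr \<alpha>"
      proof -
        have "a powr \<alpha> \<le> a powr (real ?D)" by (rule powr_mono) (use alpha a1 in auto)
        also have "\<dots> = a ^ ?D" using a_pos by (simp add: powr_realpow)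
        finally show ?thesis .
      qed
      define A0 where "A0 = (a * sqrt (2*pi)) ^ ?D"
      have A0a: "A0 \<ge> a ^ ?D"
      proof -
        have "sqrt (2*pi) \<ge> 1" using pi_gt3 by simp
        then have "a * 1 \<le> a * sqrt (2*pi)" using a_pos by (intro mult_left_mono) auto
        then show ?thesis unfolding A0_def using a_pos by (intro power_mono) auto
      qed
      have A0_pos: "A0 > 0" unfolding A0_def using a_pos by simp
      define g where "g \<xi> = (\<Sum>j<N. cis (- 2 * pi * (\<xi> \<bullet> z j)))" for \<xi> :: 'a
      define Gm where "Gm \<xi> = (cmod (g \<xi>))\<^sup>2" for \<xi>
      define Hm where "Hm \<xi> = (cmod (fourier_measure \<mu> \<xi>))\<^sup>2" for \<xi>
      define Fm where "Fm \<xi> = (cmod (g \<xi> - of_nat N * fourier_measure \<mu> \<xi>))\<^sup>2" for \<xi>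
      define A where "A = {\<xi>::'a. 1 \<le> norm \<xi> \<and> norm \<xi> \<le> M}"
      define B1 where "B1 = ball (0::'a) 1"
      define \<delta> where "\<delta> = exp (- (real ?D + 1))"
      have mfm[measurable]: "fourier_measure \<mu> \<in> borel_measurable borel"
        by (rule fourier_measurable[OF borel prob])
      have mg[measurable]: "g \<in> borel_measurable borel"
        unfolding g_def by (intro borel_measurable_continuous_onI continuous_intros)
      have mFm: "Fm \<in> borel_measurable lborel" unfolding Fm_def by measurable
      have mA: "A \<in> sets lborel" unfolding A_def by measurable
      have gb: "cmod (g \<xi>) \<le> real N" for \<xi> unfolding g_def by (rule g_bound)
      have hb: "cmod (fourier_measure \<mu> \<xi>) \<le> 1" for \<xi> by (rule fourier_bound[OF prob])
      have Fb: "Fm \<xi> \<le> (2 * real N)\<^sup>2" for \<xi>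
      proof -
        have "cmod (g \<xi> - of_nat N * fourier_measure \<mu> \<xi>) \<le> cmod (g \<xi>) + cmod (of_nat N * fourier_measure \<mu> \<xi>)"
          by (rule norm_triangle_ineq4)
        also have "cmod (of_nat N * fourier_measure \<mu> \<xi>) \<le> real N"
          using hb[of \<xi>] by (simp add: norm_mult mult_left_le)
        finally have "cmod (g \<xi> - of_nat N * fourier_measure \<mu> \<xi>) \<le> 2 * real N" using gb[of \<xi>] by simp
        then show ?thesis unfolding Fm_def by (intro power_mono) auto
      qed
      have Fm0: "Fm \<xi> \<ge> 0" for \<xi> unfolding Fm_def by simp
      have Gm0: "Gm \<xi> \<ge> 0" for \<xi> unfolding Gm_def by simp
      have Hm0: "Hm \<xi> \<ge> 0" for \<xi> unfolding Hm_def by simp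
      have GmN: "Gm \<xi> \<le> (real N)\<^sup>2" for \<xi> unfolding Gm_def using gb[of \<xi>] by (intro power_mono) auto
      have GFH: "Gm \<xi> \<le> 2 * Fm \<xi> + 2 * (real N)\<^sup>2 * Hm \<xi>" for \<xi>
      proof -
        let ?x = "cmod (g \<xi> - of_nat N * fourier_measure \<mu> \<xi>)"
        let ?y = "real N * cmod (fourier_measure \<mu> \<xi>)"
        have "cmod (g \<xi>) \<le> ?x + cmod (of_nat N * fourier_measure \<mu> \<xi>)"
          using norm_triangle_ineq[of "g \<xi> - of_nat N * fourier_measure \<mu> \<xi>" "of_nat N * fourier_measure \<mu> \<xi>"] by simp
        then have le: "cmod (g \<xi>) \<le> ?x + ?y" by (simp add: norm_mult)
        have "(cmod (g \<xi>))\<^sup>2 \<le> (?x + ?y)\<^sup>2" by (rule power_mono[OF le]) simp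
        also have "\<dots> \<le> 2 * ?x\<^sup>2 + 2 * ?y\<^sup>2"
          using sum_squares_bound[of ?x ?y] by (simp add: power2_eq_square algebra_simps)
        finally show ?thesis unfolding Gm_def Fm_def Hm_def by (simp add: power_mult_distrib)
      qed
      have iA: "integrable lborel (\<lambda>\<xi>. indicator A \<xi> * Fm \<xi>)"
      proof (rule Bochner_Integration.integrable_bound)
        show "integrable lborel (\<lambda>\<xi>. (2 * real N)\<^sup>2 * indicator (cball (0::'a) M) \<xi>)"
          using emeasure_bounded_finite[of "cball (0::'a) M"] by (intro integrable_mult_right) (simp add: integrable_indicator_iff)
        show "(\<lambda>\<xi>. indicator A \<xi> * Fm \<xi>) \<in> borel_measurable lborel"
          using mFm mA by measurable
        show "AE x in lborel. norm (indicator A x * Fm x) \<le> norm ((2 * real N)\<^sup>2 * indicator (cball (0::'a) M) x)"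
          using Fb Fm0 by (auto simp: A_def indicator_def)
      qed
      have iB1: "integrable lborel (indicator B1 :: 'a \<Rightarrow> real)"
        unfolding B1_def using emeasure_bounded_finite[of "ball (0::'a) 1"] by (simp add: integrable_indicator_iff)
      have intB1: "(\<integral>\<xi>. indicator B1 \<xi> \<partial>lborel) = V"
        unfolding B1_def V_def by simp
      have gGm: "gk b \<xi> * Gm \<xi> = gk b \<xi> * (cmod (\<Sum>j<N. cis (- 2 * pi * (\<xi> \<bullet> z j))))\<^sup>2" for b \<xi>
        unfolding Gm_def g_def ..
      have iGa: "integrable lborel (\<lambda>\<xi>. gk a \<xi> * Gm \<xi>)"
        unfolding gGm by (rule int_g(1)[OF a_pos])
      have iGa2: "integrable lborel (\<lambda>\<xi>. gk (2*a) \<xi> * Gm \<xi>)"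
        unfolding gGm by (rule int_g(1)) (use a_pos in simp)
      define L where "L = (\<Sum>j<N. \<Sum>k<N. Kf a (z j - z k))"
      define L2 where "L2 = (\<Sum>j<N. \<Sum>k<N. Kf (2*a) (z j - z k))"
      have IGa: "(\<integral>\<xi>. gk a \<xi> * Gm \<xi> \<partial>lborel) = L"
        unfolding gGm L_def by (rule int_g(2)[OF a_pos])
      have IGa2: "(\<integral>\<xi>. gk (2*a) \<xi> * Gm \<xi> \<partial>lborel) = L2"
        unfolding gGm L2_def by (rule int_g(2)) (use a_pos in simp)
      have iH: "integrable lborel (\<lambda>\<xi>. gk a \<xi> * Hm \<xi>)"
        unfolding Hm_def by (rule mu_part(1)[OF borel prob a_pos])
      define I\<mu> where "I\<mu> = (\<integral>\<xi>. gk a \<xi> * Hm \<xi> \<partial>lborel)"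
      have I\<mu>_le: "I\<mu> \<le> A0 * (c0 / a powr \<alpha> * S)"
        unfolding I\<mu>_def Hm_def mu_part(2)[OF borel prob a_pos] A0_def S_def
        by (rule mu_bound[OF borel prob a_pos alpha ball_bound c0])
      define IA where "IA = (\<integral>\<xi>. indicator A \<xi> * Fm \<xi> \<partial>lborel)"
      have D1: "(real ?D + 1)\<^sup>2 \<ge> real ?D + 1" by (simp add: power2_eq_square)
      have PW: "gk a \<xi> * Gm \<xi> \<le> 2 * (indicator A \<xi> * Fm \<xi>) + 2 * (real N)\<^sup>2 * E * (gk a \<xi> * Hm \<xi>) + (real N)\<^sup>2 * indicator B1 \<xi> + \<delta> * (gk (2*a) \<xi> * Gm \<xi>)" for \<xi>
      proof -
        define r where "r = norm \<xi>"
        define u where "u = r\<^sup>2 / a\<^sup>2"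
        have gka: "gk a \<xi> = exp (- (u / 2))" unfolding gk_def u_def r_def using a_pos by (simp add: field_simps)
        have gka2: "gk (2*a) \<xi> = exp (- (u / 8))" unfolding gk_def u_def r_def using a_pos by (simp add: field_simps power_mult_distrib)
        have gpos: "gk a \<xi> > 0" "gk (2*a) \<xi> > 0" by (simp_all add: gk_pos)
        have T1: "0 \<le> 2 * (indicator A \<xi> * Fm \<xi>)" using Fm0[of \<xi>] by simp
        have T2: "0 \<le> 2 * (real N)\<^sup>2 * E * (gk a \<xi> * Hm \<xi>)" using E_pos gpos Hm0[of \<xi>] by simp
        have T3: "0 \<le> (real N)\<^sup>2 * indicator B1 \<xi>" by simp
        have T4: "0 \<le> \<delta> * (gk (2*a) \<xi> * Gm \<xi>)" using gpos Gm0[of \<xi>] by (simp add: \<delta>_def)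
        have gGm_le: "gk a \<xi> * Gm \<xi> \<le> Gm \<xi>" using mult_left_le_one_le[OF Gm0[of \<xi>] less_imp_le[OF gk_pos[of a \<xi>]] gk_le1[of a \<xi>]] .
        consider (big) "r > M" | (small) "r < 1" | (mid) "1 \<le> r" "r \<le> M" by linarith
        then show ?thesis
        proof cases
          case big
          have "(2 * (real ?D + 1) * a)\<^sup>2 \<le> r\<^sup>2"
            using big Ma a_pos by (intro power_mono) auto
          moreover have "(2 * (real ?D + 1) * a)\<^sup>2 = 4 * (real ?D + 1)\<^sup>2 * a\<^sup>2"
            by (simp only: power_mult_distrib) simp
          ultimately have "4 * (real ?D + 1)\<^sup>2 * a\<^sup>2 \<le> r\<^sup>2" by simp
          then have "4 * (real ?D + 1)\<^sup>2 \<le> u" unfolding u_def using a_pos by (simp add: field_simps)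
          then have "- (u / 2) \<le> - (real ?D + 1) + - (u / 8)" using D1 by linarith
          then have "gk a \<xi> \<le> \<delta> * gk (2*a) \<xi>" unfolding gka gka2 \<delta>_def by (simp add: exp_add[symmetric])
          then have "gk a \<xi> * Gm \<xi> \<le> \<delta> * (gk (2*a) \<xi> * Gm \<xi>)"
            using Gm0[of \<xi>] by (simp add: mult_right_mono mult.assoc[symmetric])
          then show ?thesis using T1 T2 T3 by linarith
        next
          case small
          then have "\<xi> \<in> B1" unfolding B1_def r_def by simp
          then have "gk a \<xi> * Gm \<xi> \<le> (real N)\<^sup>2 * indicator B1 \<xi>" using gGm_le GmN[of \<xi>] by simp
          then show ?thesis using T1 T2 T4 by linarith
        next
          case mid
          then have "\<xi> \<in> A" unfolding A_def r_def by simp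
          have "r\<^sup>2 \<le> (2 * (real ?D + 1) * a)\<^sup>2"
            using mid Ma a_pos by (intro power_mono) auto
          moreover have "(2 * (real ?D + 1) * a)\<^sup>2 = 4 * (real ?D + 1)\<^sup>2 * a\<^sup>2"
            by (simp only: power_mult_distrib) simp
          ultimately have "r\<^sup>2 \<le> 4 * (real ?D + 1)\<^sup>2 * a\<^sup>2" by simp
          then have "u \<le> 4 * (real ?D + 1)\<^sup>2" unfolding u_def using a_pos by (simp add: field_simps)
          then have "0 \<le> 2 * (real ?D + 1)\<^sup>2 + - (u / 2)" by linarith
          then have "1 \<le> E * gk a \<xi>" unfolding E_def gka by (simp add: exp_add[symmetric])
          then have "Hm \<xi> \<le> E * gk a \<xi> * Hm \<xi>" using Hm0[of \<xi>] by (simp add: mult_le_cancel_right1)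
          then have "2 * (real N)\<^sup>2 * Hm \<xi> \<le> 2 * (real N)\<^sup>2 * E * (gk a \<xi> * Hm \<xi>)"
            by (simp add: mult.assoc mult_left_mono)
          then have "gk a \<xi> * Gm \<xi> \<le> 2 * (indicator A \<xi> * Fm \<xi>) + 2 * (real N)\<^sup>2 * E * (gk a \<xi> * Hm \<xi>)"
            using gGm_le GFH[of \<xi>] \<open>\<xi> \<in> A\<close> by simp
          then show ?thesis using T3 T4 by linarith
        qed
      qed
      have iR: "integrable lborel (\<lambda>\<xi>. 2 * (indicator A \<xi> * Fm \<xi>) + 2 * (real N)\<^sup>2 * E * (gk a \<xi> * Hm \<xi>) + (real N)\<^sup>2 * indicator B1 \<xi> + \<delta> * (gk (2*a) \<xi> * Gm \<xi>))"
        by (intro Bochner_Integration.integrable_add integrable_mult_right iA iH iB1 iGa2)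
      have "L \<le> (\<integral>\<xi>. 2 * (indicator A \<xi> * Fm \<xi>) + 2 * (real N)\<^sup>2 * E * (gk a \<xi> * Hm \<xi>) + (real N)\<^sup>2 * indicator B1 \<xi> + \<delta> * (gk (2*a) \<xi> * Gm \<xi>) \<partial>lborel)"
        unfolding IGa[symmetric] by (rule integral_mono[OF iGa iR PW])
      also have "\<dots> = 2 * IA + 2 * (real N)\<^sup>2 * E * I\<mu> + (real N)\<^sup>2 * V + \<delta> * L2"
        by (subst Bochner_Integration.integral_add; (intro Bochner_Integration.integrable_add integrable_mult_right iA iH iB1 iGa2)?)+
           (simp add: IA_def I\<mu>_def IGa2 V_def B1_def)
      finally have main: "L \<le> 2 * IA + 2 * (real N)\<^sup>2 * E * I\<mu> + (real N)\<^sup>2 * V + \<delta> * L2" .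
      have Kf0: "Kf a (0::'a) = A0" unfolding Kf_def A0_def by simp
      have L_ge: "L \<ge> real N * A0"
      proof -
        have "real N * A0 = (\<Sum>j<N. Kf a (z j - z j))" by (simp add: Kf0)
        also have "\<dots> \<le> L" unfolding L_def
        proof (rule sum_mono)
          fix j assume "j \<in> {..<N}"
          then show "Kf a (z j - z j) \<le> (\<Sum>k<N. Kf a (z j - z k))"
            by (intro member_le_sum[of j "{..<N}" "\<lambda>k. Kf a (z j - z k)"]) (auto intro: Kf_nonneg a_pos)
        qed
        finally show ?thesis .
      qed
      have L2_le: "L2 \<le> 2 ^ ?D * L"
      proof -
        have t: "Kf (2*a) v \<le> 2 ^ ?D * Kf a v" for v :: 'a
        proof -
          have "exp (- (2*a)\<^sup>2 * (2*pi)\<^sup>2 * (norm v)\<^sup>2 / 2) \<le> exp (- a\<^sup>2 * (2*pi)\<^sup>2 * (norm v)\<^sup>2 / 2)"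
            by (simp add: power_mult_distrib)
          then have "(a * sqrt (2*pi)) ^ ?D * exp (- (2*a)\<^sup>2 * (2*pi)\<^sup>2 * (norm v)\<^sup>2 / 2) \<le> (a * sqrt (2*pi)) ^ ?D * exp (- a\<^sup>2 * (2*pi)\<^sup>2 * (norm v)\<^sup>2 / 2)"
            using a_pos by (intro mult_left_mono) auto
          then show ?thesis unfolding Kf_def by (simp add: power_mult_distrib mult.assoc)
        qed
        have "L2 \<le> (\<Sum>j<N. \<Sum>k<N. 2 ^ ?D * Kf a (z j - z k))"
          unfolding L2_def by (intro sum_mono t)
        also have "\<dots> = 2 ^ ?D * L" unfolding L_def by (simp add: sum_distrib_left)
        finally show ?thesis .
      qed
      have L0: "L \<ge> 0" using L_ge A0_pos by (meson dual_order.trans mult_nonneg_nonneg of_nat_0_le_iff less_imp_le)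
      have \<delta>_le: "\<delta> * 2 ^ ?D \<le> 1 / 2"
      proof -
        have "(2::real) ^ Suc ?D \<le> exp 1 ^ Suc ?D"
          by (intro power_mono) (use exp_ge_add_one_self[of 1] in auto)
        also have "\<dots> = exp (real ?D + 1)" by (simp add: exp_of_nat_mult[symmetric] algebra_simps exp_add)
        finally have "2 * 2 ^ ?D \<le> exp (real ?D + 1)" by simp
        then have "\<delta> * (2 * 2 ^ ?D) \<le> \<delta> * exp (real ?D + 1)"
          by (intro mult_left_mono) (auto simp: \<delta>_def)
        also have "\<delta> * exp (real ?D + 1) = 1" unfolding \<delta>_def by (simp add: exp_add[symmetric])
        finally show ?thesis by simp
      qed
      have \<delta>L2: "\<delta> * L2 \<le> L / 2"
      proof -
        have "\<delta> * L2 \<le> \<delta> * (2 ^ ?D * L)" using L2_le by (intro mult_left_mono) (auto simp: \<delta>_def)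
        also have "\<dots> = (\<delta> * 2 ^ ?D) * L" by simp
        also have "\<dots> \<le> (1/2) * L" using \<delta>_le L0 by (intro mult_right_mono) auto
        finally show ?thesis by simp
      qed
      have aA0: "Q * real N \<le> A0" using aQ aD A0a by linarith
      have VN: "(real N)\<^sup>2 * V \<le> real N * A0 / 8"
      proof -
        have "8 * V * real N \<le> Q * real N" using QV by (intro mult_right_mono) auto
        then have "8 * V * real N \<le> A0" using aA0 by linarith
        then have "real N * (8 * V * real N) \<le> real N * A0" by (intro mult_left_mono) auto
        then show ?thesis by (simp add: power2_eq_square field_simps)
      qed
      have apos: "a powr \<alpha> > 0" using a_pos by simp
      have EI: "2 * (real N)\<^sup>2 * E * I\<mu> \<le> real N * A0 / 8"
      proof -
        define t where "t = c0 / a powr \<alpha> * S"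
        have t0: "t \<ge> 0" unfolding t_def using c0 S0 apos by simp
        have "16 * E * c0 * S * real N \<le> Q * real N" using QE by (intro mult_right_mono) auto
        also have "\<dots> \<le> a powr \<alpha>" by (rule aQ)
        finally have "16 * E * c0 * S * real N \<le> a powr \<alpha>" .
        then have Et: "16 * (real N * E * t) \<le> 1" unfolding t_def using apos by (simp add: field_simps)
        have "2 * (real N)\<^sup>2 * E * I\<mu> \<le> 2 * (real N)\<^sup>2 * E * (A0 * t)"
          using I\<mu>_le E_pos unfolding t_def by (intro mult_left_mono) auto
        also have "\<dots> = 2 * (real N * A0) * (real N * E * t)" by (simp add: power2_eq_square mult_ac)
        also have "\<dots> \<le> 2 * (real N * A0) * (1/16)"
          using Et A0_pos by (intro mult_left_mono) auto
        finally show ?thesis by (simp add: mult.commute)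
      qed
      have IA_ge: "IA \<ge> real N * A0 / 8" using main \<delta>L2 VN EI L_ge by linarith
      have "c2 * real N * M ^ ?D = real N * (c * M) ^ ?D / 8" unfolding c2_def by (simp add: power_mult_distrib)
      also have "\<dots> = real N * a ^ ?D / 8" unfolding a_def ..
      also have "\<dots> \<le> real N * A0 / 8" using A0a by (intro divide_right_mono mult_left_mono) auto
      also have "\<dots> \<le> IA" by (rule IA_ge)
      also have "IA = (LINT \<xi>:{\<xi>. 1 \<le> norm \<xi> \<and> norm \<xi> \<le> M}|lborel.
               (cmod ((\<Sum>j<N. cis (- 2 * pi * (\<xi> \<bullet> z j))) - of_nat N * fourier_measure \<mu> \<xi>))\<^sup>2)"
        unfolding IA_def set_lebesgue_integral_def A_def Fm_def g_def by simp
      finally show ?thesis .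
    qed
  qed
qed

end
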